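(* The language $P^*_n=\{w \in \{1,\dots,n\}^* : |w|_a \geq 1 \text{ for all } a \in \{1,\dots,n\}\}$ requires regular expressions of length at least $\mathrm{rpn}(P^*_n) \geq \Omega\big(4^n n^{- (3+\log n)/4}\big)$.
   Context: $|w|_a$ is the number of occurrences of letter $a$ in $w$. Regular expressions are built from $\epsilon$ and letters by union, concatenation and star (no $\emptyset$); $\mathrm{rpn}(L)$ is the minimum number of syntax-tree nodes of an expression describing $L$. Logarithms are base 2. *)

theory Defs
  imports Complex_Main
begin

datatype 'a rexp = Eps | Atom 'a | Plus "'a rexp" "'a rexp" | Times "'a rexp" "'a rexp" | Star "'a rexp"

definition conc :: "'a list set \<Rightarrow> 'a list set \<Rightarrow> 'a list set" where
  "conc A B = {u @ v | u v. u \<in> A \<and> v \<in> B}"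

inductive_set star :: "'a list set \<Rightarrow> 'a list set" for A where
  star_Nil: "[] \<in> star A"
| star_app: "u \<in> A \<Longrightarrow> v \<in> star A \<Longrightarrow> u @ v \<in> star A"

fun lang :: "'a rexp \<Rightarrow> 'a list set" where
  "lang Eps = {[]}"
| "lang (Atom a) = {[a]}"
| "lang (Plus r s) = lang r \<union> lang s"
| "lang (Times r s) = conc (lang r) (lang s)"
| "lang (Star r) = star (lang r)"

fun rsize :: "'a rexp \<Rightarrow> nat" where
  "rsize Eps = 1"
| "rsize (Atom a) = 1"
| "rsize (Plus r s) = rsize r + rsize s + 1"
| "rsize (Times r s) = rsize r + rsize s + 1"
| "rsize (Star r) = rsize r + 1"

fun atoms :: "'a rexp \<Rightarrow> 'a set" where
  "atoms Eps = {}"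
| "atoms (Atom a) = {a}"
| "atoms (Plus r s) = atoms r \<union> atoms s"
| "atoms (Times r s) = atoms r \<union> atoms s"
| "atoms (Star r) = atoms r"

definition rpn :: "'a set \<Rightarrow> 'a list set \<Rightarrow> nat" where
  "rpn \<Sigma> L = (LEAST k. \<exists>r. atoms r \<subseteq> \<Sigma> \<and> lang r = L \<and> rsize r = k)"

definition occ :: "'a list \<Rightarrow> 'a \<Rightarrow> nat" where
  "occ w a = length (filter (\<lambda>x. x = a) w)"

definition Pn :: "nat \<Rightarrow> nat list set" where
  "Pn n = {w. set w \<subseteq> {1..n} \<and> (\<forall>a\<in>{1..n}. occ w a \<ge> 1)}"

end

theory Submission
  imports Defs "HOL-Real_Asymp.Real_Asymp" "HOL-Combinatorics.Multiset_Permutations"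
begin


definition Fr :: "real \<Rightarrow> real" where "Fr x = x powr ((3 + log 2 x)/4)"

lemma Fr_ge1: "1 \<le> x \<Longrightarrow> 1 \<le> Fr x"
  unfolding Fr_def by (intro ge_one_powr_ge_zero) auto

lemma Fr_pos: "1 \<le> x \<Longrightarrow> 0 < Fr x"
  using Fr_ge1[of x] by linarith

lemma Fr_mono: assumes "1 \<le> x" "x \<le> y" shows "Fr x \<le> Fr y"
proof -
  have "x powr ((3 + log 2 x)/4) \<le> y powr ((3 + log 2 x)/4)"
    using assms by (intro powr_mono2) auto
  also have "\<dots> \<le> y powr ((3 + log 2 y)/4)"
    using assms by (intro powr_mono) auto
  finally show ?thesis unfolding Fr_def .
qed

lemma Fr_double: assumes "1 \<le> m" shows "Fr (2*m) = 2 * sqrt m * Fr m"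
proof -
  define t where "t = log 2 m"
  have l: "log 2 (2*m) = 1 + t" using assms unfolding t_def by (simp add: log_mult)
  have "Fr (2*m) = (2*m) powr ((4 + t)/4)" unfolding Fr_def l by (simp add: add.commute add.left_commute)
  also have "\<dots> = 2 powr ((4+t)/4) * m powr ((4+t)/4)" using assms by (simp add: powr_mult)
  also have "2 powr ((4+t)/4) = 2 * 2 powr (t/4)"
    by (simp add: add_divide_distrib powr_add)
  also have "2 powr (t/4) = m powr (1/4)"
  proof -
    have "2 powr (t/4) = (2 powr t) powr (1/4)" by (simp add: powr_powr)
    also have "2 powr t = m" unfolding t_def using assms by simp
    finally show ?thesis .
  qed
  also have "m powr ((4+t)/4) = m powr (1/4) * m powr ((3+t)/4)"
    by (simp add: powr_add[symmetric] add_divide_distrib[symmetric])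
  also have "sqrt m = m powr (1/4) * m powr (1/4)"
    using assms by (simp add: powr_add[symmetric] sqrt_def root_powr_inverse) 
  ultimately show ?thesis unfolding Fr_def t_def by (simp add: mult_ac)
qed

lemma Fr_step: "\<exists>J::nat. \<forall>j\<ge>J. Fr (real j + 1) \<le> 4/3 * Fr (real j)"
proof -
  have "eventually (\<lambda>x::real. (x+1) powr ((3 + log 2 (x+1))/4) \<le> 4/3 * (x powr ((3 + log 2 x)/4))) at_top"
    by real_asymp
  then obtain X where X: "\<And>x. x \<ge> X \<Longrightarrow> (x+1) powr ((3 + log 2 (x+1))/4) \<le> 4/3 * (x powr ((3 + log 2 x)/4))"
    by (auto simp: eventually_at_top_linorder)
  show ?thesis
  proof (intro exI allI impI)
    fix j assume "nat \<lceil>X\<rceil> \<le> j"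
    then have "X \<le> real j" by linarith
    then show "Fr (real j + 1) \<le> 4/3 * Fr (real j)" using X unfolding Fr_def by blast
  qed
qed

lemma central_binom_nat: "m \<ge> 1 \<Longrightarrow> 16^m \<le> 4*m*((2*m) choose m)^2"
proof (induction m rule: nat_induct_at_least)
  case base then show ?case by (simp add: numeral_2_eq_2)
next
  case (Suc m)
  define C where "C = (2*m) choose m"
  have rec: "(m+1) * ((2*(m+1)) choose (m+1)) = 2*(2*m+1) * C"
  proof -
    have a: "Suc (2*m+1) * ((2*m+1) choose m) = ((2*m+2) choose (m+1)) * (m+1)"
      using Suc_times_binomial_eq[of "2*m+1" m] by (simp del: binomial_Suc_Suc add: numeral_2_eq_2)
    have b: "Suc m * ((2*m+1) choose (m+1)) = (2*m+1) * ((2*m) choose m)"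
      using Suc_times_binomial[of m "2*m"] by (simp del: binomial_Suc_Suc)
    have c: "((2*m+1) choose (m+1)) = ((2*m+1) choose m)"
      using binomial_symmetric[of "m+1" "2*m+1"] by (simp del: binomial_Suc_Suc)
    have "(m+1) * ((m+1) * ((2*(m+1)) choose (m+1))) = (m+1) * (2*(m+1) * ((2*m+1) choose m))"
      using a by (simp del: binomial_Suc_Suc add: algebra_simps numeral_2_eq_2)
    also have "\<dots> = 2*(m+1) * ((m+1) * ((2*m+1) choose (m+1)))" using c by (simp del: binomial_Suc_Suc add: algebra_simps)
    also have "\<dots> = (m+1) * (2*(2*m+1) * C)" using b unfolding C_def by (simp del: binomial_Suc_Suc add: algebra_simps)
    finally have "(m+1) * ((m+1) * ((2*(m+1)) choose (m+1))) = (m+1) * (2*(2*m+1) * C)" .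
    then show ?thesis by (metis add_gr_0 less_numeral_extra(1) nat_mult_eq_cancel1)
  qed
  define D where "D = (2*(m+1)) choose (m+1)"
  have IH: "16^m \<le> 4*m*C^2" using Suc unfolding C_def by simp
  have "(m+1)^2 * (16^(m+1)) \<le> (m+1)^2 * (4*(m+1)*D^2)"
  proof -
    have "(m+1)^2 * (4*(m+1)*D^2) = 4*(m+1) * ((m+1)*D)^2" by (simp add: power2_eq_square algebra_simps)
    also have "\<dots> = 4*(m+1)*(2*(2*m+1)*C)^2" using rec unfolding D_def by simp
    also have "\<dots> = 16*(m+1)*(2*m+1)^2 * C^2" by (simp add: power2_eq_square algebra_simps)
    finally have e: "(m+1)^2 * (4*(m+1)*D^2) = 16*(m+1)*(2*m+1)^2 * C^2" .
    have "m * ((m+1)^2 * 16^(m+1)) = 16 * (m+1)^2 * (m * 16^m)" by (simp add: algebra_simps)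
    also have "\<dots> \<le> 16 * (m+1)^2 * (m * (4*m*C^2))" using IH by (intro mult_left_mono) auto
    also have "\<dots> = 16 * (m+1) * (4*m*(m+1)) * m * C^2" by (simp add: power2_eq_square algebra_simps)
    also have "\<dots> \<le> 16 * (m+1) * (2*m+1)^2 * m * C^2"
      by (intro mult_right_mono mult_left_mono) (auto simp: power2_eq_square algebra_simps)
    also have "\<dots> = m * (16*(m+1)*(2*m+1)^2 * C^2)" by (simp add: algebra_simps)
    finally have "m * ((m+1)^2 * 16^(m+1)) \<le> m * ((m+1)^2 * (4*(m+1)*D^2))" using e by simp
    then show ?thesis using Suc.hyps by simp
  qed
  then have "16^(m+1) \<le> 4*(m+1)*D^2" by (simp add: mult_le_cancel_left)
  then show ?case unfolding D_def by simp
qed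

lemma central_binom: assumes "m \<ge> 1" shows "(4::real)^m \<le> 2 * sqrt m * ((2*m) choose m)"
proof -
  have "real (16^m) \<le> real (4*m*((2*m) choose m)^2)" using central_binom_nat[OF assms] by linarith
  moreover have "((4::real)^m)^2 = 16^m"
  proof -
    have "((4::real)^m)^2 = (4^2)^m" by (metis power_mult mult.commute)
    then show ?thesis by simp
  qed
  moreover have "(2 * sqrt m * ((2*m) choose m))^2 = real (4*m*((2*m) choose m)^2)"
    by (simp add: power_mult_distrib)
  ultimately have "((4::real)^m)^2 \<le> (2 * sqrt m * ((2*m) choose m))^2" by simp
  then show ?thesis
    by (rule power2_le_imp_le) auto
qed

lemma center_even: assumes "m \<ge> 1"
  shows "4^m * Fr (real m) \<le> real ((2*m) choose m) * Fr (real (2*m))"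
proof -
  have "Fr (real (2*m)) = 2 * sqrt m * Fr m" using Fr_double[of "real m"] assms by simp
  moreover have "4^m * Fr (real m) \<le> (2 * sqrt m * ((2*m) choose m)) * Fr m"
    using central_binom[OF assms] Fr_pos[of "real m"] assms by (intro mult_right_mono) auto
  ultimately show ?thesis by (simp add: mult_ac)
qed

lemma center_odd: assumes "m \<ge> 1" and st: "Fr (real (2*m+1) + 1) \<le> 4/3 * Fr (real (2*m+1))"
  shows "4^m * Fr (real (m+1)) \<le> real ((2*m+1) choose m) * Fr (real (2*m+1))"
proof -
  have b: "((2*m+2) choose (m+1)) = 2 * ((2*m+1) choose m)"
  proof -
    have "((2*m+2) choose (m+1)) = ((2*m+1) choose m) + ((2*m+1) choose (m+1))"
      using binomial_Suc_Suc[of "2*m+1" m] by simp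
    moreover have "((2*m+1) choose (m+1)) = ((2*m+1) choose m)"
      using binomial_symmetric[of "m+1" "2*m+1"] by (simp del: binomial_Suc_Suc)
    ultimately show ?thesis by simp
  qed
  have d: "Fr (real (2*m+2)) = 2 * sqrt (m+1) * Fr (m+1)"
    using Fr_double[of "real m + 1"] by (simp add: algebra_simps)
  have cb: "(4::real)^(m+1) \<le> 2 * sqrt (real (m+1)) * ((2*(m+1)) choose (m+1))"
    using central_binom[of "m+1"] by simp
  have "2*m+2 = 2*(m+1)" by simp
  then have cb': "(4::real)^(m+1) \<le> 2 * sqrt (real (m+1)) * (2 * ((2*m+1) choose m))"
    using cb b by (metis of_nat_mult of_nat_numeral)
  have fp: "0 < Fr (real (m+1))" using Fr_pos by simp
  have "4^m * Fr (real (m+1)) * 4 = 4^(m+1) * Fr (real (m+1))" by simp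
  also have "\<dots> \<le> 2 * sqrt (real (m+1)) * (2 * ((2*m+1) choose m)) * Fr (real (m+1))"
    using cb' fp by (intro mult_right_mono) auto
  also have "\<dots> = 2 * ((2*m+1) choose m) * Fr (real (2*m+2))" using d by (simp add: mult_ac)
  also have "\<dots> \<le> 2 * ((2*m+1) choose m) * (4/3 * Fr (real (2*m+1)))"
    using st by (intro mult_left_mono) (auto simp: add.assoc)
  finally have "4^m * Fr (real (m+1)) * 4 \<le> 8/3 * (((2*m+1) choose m) * Fr (real (2*m+1)))"
    by (simp add: mult_ac)
  moreover have "0 \<le> real ((2*m+1) choose m) * Fr (real (2*m+1))"
    using Fr_pos[of "real (2*m+1)"] by simp
  ultimately show ?thesis by linarith
qed

lemma binom_step: assumes "k < n" "(4::real)^(k+1) * Fr (real (n-(k+1))) \<le> real (n choose (k+1)) * Fr (real n)"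
  and "Fr (real (n-(k+1)) + 1) \<le> 4/3 * Fr (real (n-(k+1)))" and "n \<le> 4*k+3"
  shows "(4::real)^k * Fr (real (n-k)) \<le> real (n choose k) * Fr (real n)"
proof -
  have e: "real (n - (k+1)) + 1 = real (n-k)" using assms(1) by simp
  have rec: "real (Suc k) * real (n choose Suc k) = real (n - k) * real (n choose k)"
  proof -
    obtain p where p: "n = Suc p" using assms(1) by (cases n) auto
    have "Suc k * (Suc p choose Suc k) = Suc p * (p choose k)" by (rule Suc_times_binomial)
    moreover have "(Suc p - k) * (Suc p choose k) = Suc p * (p choose k)"
      using binomial_absorb_comp[of "Suc p" k] by simp
    ultimately have "Suc k * (n choose Suc k) = (n - k) * (n choose k)" using p by simp
    then show ?thesis by (metis of_nat_mult)
  qed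
  have fpos: "0 \<le> Fr (real (n-k))" using Fr_pos[of "real (n-k)"] assms(1) by simp
  have "real (n-k) * (4^k * Fr (real (n-k))) \<le> 3*(k+1) * (4^k * Fr (real (n-k)))"
    using assms(1,4) fpos by (intro mult_right_mono) auto
  also have "\<dots> = (k+1) * 4^(k+1) * (3/4 * Fr (real (n-k)))" by (simp add: field_simps)
  also have "\<dots> \<le> (k+1) * 4^(k+1) * Fr (real (n-(k+1)))"
    using assms(3) e by (intro mult_left_mono) auto
  also have "\<dots> = (k+1) * (4^(k+1) * Fr (real (n-(k+1))))" by (simp add: algebra_simps)
  also have "\<dots> \<le> (k+1) * (real (n choose (k+1)) * Fr (real n))"
    by (rule mult_left_mono[OF assms(2)]) simp
  also have "\<dots> = real (n-k) * (real (n choose k) * Fr (real n))" using rec by (simp add: mult.assoc)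
  finally show ?thesis using assms(1) by (simp add: mult_le_cancel_left)
qed

lemma key_binom: "\<exists>N0\<ge>2. \<forall>n\<ge>N0. \<forall>k. 1 \<le> k \<longrightarrow> k \<le> n div 2 \<longrightarrow>
   (4::real)^k * Fr (real (n-k)) \<le> real (n choose k) * Fr (real n)"
proof -
  obtain J where J: "\<And>j. j\<ge>J \<Longrightarrow> Fr (real j + 1) \<le> 4/3 * Fr (real j)" using Fr_step by blast
  show ?thesis
  proof (intro exI conjI allI impI)
    fix n k :: nat assume n: "2*J+4 \<le> n" and k: "1 \<le> k" "k \<le> n div 2"
    define P where "P k \<longleftrightarrow> (4::real)^k * Fr (real (n-k)) \<le> real (n choose k) * Fr (real n)" for k
    show "(4::real)^k * Fr (real (n-k)) \<le> real (n choose k) * Fr (real n)"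
    proof (cases "4*k \<le> n")
      case True
      have "(4::real)^k \<le> (real n / real k)^k"
        using True k by (intro power_mono) (auto simp: field_simps)
      also have "\<dots> \<le> real (n choose k)" using k by (intro binomial_ge_n_over_k_pow_k) auto
      finally have a: "(4::real)^k \<le> real (n choose k)" .
      have b: "Fr (real (n-k)) \<le> Fr (real n)" using k n by (intro Fr_mono) auto
      have "k < n" using k n by linarith
      then have kn: "1 \<le> real (n-k)" by simp
      have c: "0 \<le> Fr (real (n-k))" using Fr_pos[OF kn] by simp
      show ?thesis using a b c
        by (intro mult_mono) auto
    next
      case False
      have center: "P (n div 2)"
      proof (cases "even n")
        case True
        then obtain m where m: "n = 2*m" by blast
        then have "n div 2 = m" "n - m = m" "m \<ge> 1" using n by auto
        then show ?thesis unfolding P_def using center_even[of m] m by simp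
      next
        case False
        then obtain m where m: "n = 2*m+1" using oddE by blast
        then have "n div 2 = m" "n - m = m+1" "m \<ge> 1" using n by auto
        moreover have "Fr (real (2*m+1) + 1) \<le> 4/3 * Fr (real (2*m+1))" using J[of "2*m+1"] m n by simp
        ultimately show ?thesis unfolding P_def using center_odd[of m] m by simp
      qed
      have "\<forall>i. i \<le> n div 2 - k \<longrightarrow> P (n div 2 - i)"
      proof
        fix i show "i \<le> n div 2 - k \<longrightarrow> P (n div 2 - i)"
        proof (induction i)
          case 0 then show ?case using center by simp
        next
          case (Suc i)
          show ?case
          proof
            assume i: "Suc i \<le> n div 2 - k"
            define kk where "kk = n div 2 - Suc i"
            have kk1: "kk + 1 = n div 2 - i" using i k unfolding kk_def by auto
            have Pk1: "P (kk+1)" using Suc i kk1 by simp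
            have kkn: "kk < n" using k n unfolding kk_def by auto
            have kkk: "k \<le> kk" using i unfolding kk_def by auto
            have "J \<le> n - (kk+1)" using n unfolding kk_def by auto
            then have st: "Fr (real (n-(kk+1)) + 1) \<le> 4/3 * Fr (real (n-(kk+1)))" using J by blast
            have "n \<le> 4*kk+3" using False kkk by auto
            then have "P kk" using binom_step[OF kkn _ st] Pk1 unfolding P_def by simp
            then show "P (n div 2 - Suc i)" unfolding kk_def .
          qed
        qed
      qed
      then have "P (n div 2 - (n div 2 - k))" by blast
      then show ?thesis using k unfolding P_def by simp
    qed
  qed simp
qed



fun mlen :: "'a rexp \<Rightarrow> nat" where
  "mlen Eps = 0"
| "mlen (Atom a) = 1"
| "mlen (Plus r s) = min (mlen r) (mlen s)"
| "mlen (Times r s) = mlen r + mlen s"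
| "mlen (Star r) = 0"

lemma mlen_props: "(\<forall>w\<in>lang r. mlen r \<le> length w) \<and> (\<exists>w\<in>lang r. length w = mlen r)"
proof (induction r)
  case (Plus r s) then show ?case by (auto simp: min_def)
next
  case (Times r s)
  then obtain u v where "u \<in> lang r" "length u = mlen r" "v \<in> lang s" "length v = mlen s" by blast
  then have "u @ v \<in> lang (Times r s)" by (auto simp: conc_def)
  moreover have "\<forall>w\<in>lang (Times r s). mlen (Times r s) \<le> length w"
    using Times by (force simp: conc_def)
  ultimately show ?case using \<open>length u = _\<close> \<open>length v = _\<close> by force
next
  case (Star r) then show ?case using star.star_Nil by force
qed auto

definition Mw :: "'a rexp \<Rightarrow> 'a list set" where
  "Mw r = {w \<in> lang r. length w = mlen r}"

lemma Mw_nonempty: "Mw r \<noteq> {}"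
  using mlen_props[of r] unfolding Mw_def by auto

lemma Mw_Plus: "Mw (Plus r s) = (if mlen r < mlen s then Mw r else if mlen s < mlen r then Mw s else Mw r \<union> Mw s)"
  using mlen_props[of r] mlen_props[of s] unfolding Mw_def by (auto simp: min_def) 

lemma concI: "u \<in> A \<Longrightarrow> v \<in> B \<Longrightarrow> u @ v \<in> conc A B"
  unfolding conc_def by blast

lemma Mw_Times: "Mw (Times r s) = conc (Mw r) (Mw s)"
proof
  show "Mw (Times r s) \<subseteq> conc (Mw r) (Mw s)"
  proof
    fix w assume "w \<in> Mw (Times r s)"
    then obtain u v where "w = u @ v" "u \<in> lang r" "v \<in> lang s" "length w = mlen r + mlen s"
      unfolding Mw_def by (auto simp: conc_def)
    moreover have "mlen r \<le> length u" "mlen s \<le> length v" using mlen_props[of r] mlen_props[of s] calculation by auto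
    ultimately have "u \<in> Mw r" "v \<in> Mw s" "w = u @ v" unfolding Mw_def by auto
    then show "w \<in> conc (Mw r) (Mw s)" unfolding conc_def by blast
  qed
next
  show "conc (Mw r) (Mw s) \<subseteq> Mw (Times r s)"
  proof
    fix w assume "w \<in> conc (Mw r) (Mw s)"
    then obtain u v where "w = u @ v" "u \<in> Mw r" "v \<in> Mw s" unfolding conc_def by blast
    then show "w \<in> Mw (Times r s)" unfolding Mw_def by (auto intro: concI)
  qed
qed

lemma Mw_Star: "Mw (Star r) = {[]}"
  unfolding Mw_def using star.star_Nil by auto

lemma perm_empty: "[] \<in> permutations_of_set A \<Longrightarrow> A = {}"
  by (auto simp: permutations_of_set_def)

lemma main_claim:
  fixes g :: "nat \<Rightarrow> real"
  assumes g0: "\<And>l. 0 \<le> g l" and g00: "g 0 \<le> 1" and g1: "g 1 \<le> 1"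
    and grec: "\<And>l k. k \<le> l \<Longrightarrow> g l \<le> real (l choose k) * (g k + g (l-k) + 1)"
  shows "finite A \<Longrightarrow> Mw r \<subseteq> permutations_of_set A \<Longrightarrow>
     real (card (Mw r)) / fact (card A) * g (card A) \<le> real (rsize r)"
proof (induction r arbitrary: A)
  case Eps
  have e: "Mw Eps = {[]}" by (auto simp: Mw_def)
  then have "A = {}" using perm_empty Eps.prems(2) by blast
  then show ?case unfolding e using g00 by simp
next
  case (Atom a)
  then have "[a] \<in> permutations_of_set A" by (auto simp: Mw_def)
  then have "A = {a}" by (auto simp: permutations_of_set_def)
  moreover have "Mw (Atom a) = {[a]}" by (auto simp: Mw_def)
  ultimately show ?case using g1 by simp
next
  case (Star r)
  then have "[] \<in> permutations_of_set A" using Mw_Star by blast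
  then have "A = {}" using perm_empty by blast
  then show ?case using g00 by (simp add: Mw_Star)
next
  case (Plus r s)
  show ?case
  proof (cases "mlen r < mlen s")
    case True
    then have e: "Mw (Plus r s) = Mw r" by (simp add: Mw_Plus)
    then have "Mw r \<subseteq> permutations_of_set A" using Plus.prems(2) by simp
    from Plus.IH(1)[OF Plus.prems(1) this] show ?thesis using e by simp
  next
    case F1: False
    show ?thesis
    proof (cases "mlen s < mlen r")
      case True
      then have e: "Mw (Plus r s) = Mw s" using F1 by (simp add: Mw_Plus)
      then have "Mw s \<subseteq> permutations_of_set A" using Plus.prems(2) by simp
      from Plus.IH(2)[OF Plus.prems(1) this] show ?thesis using e by simp
    next
      case False
      then have e: "Mw (Plus r s) = Mw r \<union> Mw s" using F1 by (simp add: Mw_Plus)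
      then have sr: "Mw r \<subseteq> permutations_of_set A" and ss: "Mw s \<subseteq> permutations_of_set A"
        using Plus.prems by auto
      have c: "real (card (Mw (Plus r s))) \<le> real (card (Mw r)) + real (card (Mw s))"
        unfolding e using card_Un_le[of "Mw r" "Mw s"] by linarith
      have "real (card (Mw (Plus r s))) / fact (card A) * g (card A)
          \<le> (real (card (Mw r)) + real (card (Mw s))) / fact (card A) * g (card A)"
        using c g0 by (intro mult_right_mono divide_right_mono) auto
      also have "\<dots> = real (card (Mw r)) / fact (card A) * g (card A) + real (card (Mw s)) / fact (card A) * g (card A)"
        by (simp add: add_divide_distrib distrib_right)
      also have "\<dots> \<le> real (rsize r) + real (rsize s)"
        using Plus.IH(1)[OF Plus.prems(1) sr] Plus.IH(2)[OF Plus.prems(1) ss] by linarith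
      finally show ?thesis by simp
    qed
  qed
next
  case (Times r s)
  have sub: "conc (Mw r) (Mw s) \<subseteq> permutations_of_set A" using Times.prems(2) unfolding Mw_Times .
  obtain u0 where u0: "u0 \<in> Mw r" using Mw_nonempty by blast
  obtain v0 where v0: "v0 \<in> Mw s" using Mw_nonempty by blast
  define B where "B = A - set v0"
  have sr: "Mw r \<subseteq> permutations_of_set B"
  proof
    fix u assume "u \<in> Mw r"
    then have "u @ v0 \<in> conc (Mw r) (Mw s)" using v0 by (rule concI)
    then have "u @ v0 \<in> permutations_of_set A" using sub by blast
    then have "distinct u" "set u \<inter> set v0 = {}" "set u \<union> set v0 = A"
      unfolding permutations_of_set_def by auto
    then show "u \<in> permutations_of_set B" unfolding B_def permutations_of_set_def by blast
  qed
  have setu0: "set u0 = B" using sr u0 by (auto simp: permutations_of_set_def)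
  have BA: "B \<subseteq> A" unfolding B_def by auto
  have ss: "Mw s \<subseteq> permutations_of_set (A - B)"
  proof
    fix v assume "v \<in> Mw s"
    then have "u0 @ v \<in> conc (Mw r) (Mw s)" using u0 by (intro concI)
    then have "u0 @ v \<in> permutations_of_set A" using sub by blast
    then have "distinct v" "set u0 \<inter> set v = {}" "set u0 \<union> set v = A"
      unfolding permutations_of_set_def by auto
    then show "v \<in> permutations_of_set (A - B)" using setu0 unfolding permutations_of_set_def by blast
  qed
  define l where "l = card A"
  define k where "k = card B"
  have finB: "finite B" using finite_subset[OF BA Times.prems(1)] .
  have kl: "k \<le> l" unfolding k_def l_def using card_mono[OF Times.prems(1) BA] .
  have cAB: "card (A - B) = l - k" unfolding k_def l_def using BA finB card_Diff_subset by blast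
  have IHr: "real (card (Mw r)) / fact k * g k \<le> real (rsize r)"
    using Times.IH(1)[OF finB sr] unfolding k_def .
  have IHs: "real (card (Mw s)) / fact (l-k) * g (l-k) \<le> real (rsize s)"
    using Times.IH(2)[OF _ ss] Times.prems(1) cAB by simp
  have cr: "card (Mw r) \<le> fact k"
    using card_mono[OF _ sr] finB unfolding k_def by simp
  have cs: "card (Mw s) \<le> fact (l-k)"
    using card_mono[OF _ ss] Times.prems(1) cAB by simp
  have finr: "finite (Mw r)" using finite_subset[OF sr] by simp
  have fins: "finite (Mw s)" using finite_subset[OF ss] by simp
  have ci: "Mw (Times r s) = (\<lambda>(u,v). u @ v) ` (Mw r \<times> Mw s)" unfolding Mw_Times conc_def by auto
  have "card ((\<lambda>(u,v). u @ v) ` (Mw r \<times> Mw s)) \<le> card (Mw r \<times> Mw s)"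
    using finr fins by (intro card_image_le) simp
  then have "card (Mw (Times r s)) \<le> card (Mw r \<times> Mw s)" unfolding ci .
  then have ct: "card (Mw (Times r s)) \<le> card (Mw r) * card (Mw s)" by (simp add: card_cartesian_product)
  define a where "a = real (card (Mw r)) / fact k"
  define b where "b = real (card (Mw s)) / fact (l-k)"
  define C where "C = real (l choose k)"
  have crr: "real (card (Mw r)) \<le> fact k" using cr by (metis of_nat_fact of_nat_le_iff)
  have csr: "real (card (Mw s)) \<le> fact (l-k)" using cs by (metis of_nat_fact of_nat_le_iff)
  have a01: "0 \<le> a" "a \<le> 1" unfolding a_def using crr by (auto simp: divide_le_eq_1)
  have b01: "0 \<le> b" "b \<le> 1" unfolding b_def using csr by (auto simp: divide_le_eq_1)
  have Cpos: "C \<ge> 1" unfolding C_def using kl by (simp add: Suc_leI)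
  have fl: "(fact l :: real) = fact k * fact (l-k) * C"
    unfolding C_def using binomial_fact_lemma[OF kl]
    by (metis (mono_tags) of_nat_fact of_nat_mult)
  have "real (card (Mw (Times r s))) / fact l \<le> real (card (Mw r) * card (Mw s)) / fact l"
    using ct by (intro divide_right_mono) (metis of_nat_le_iff, simp)
  also have "\<dots> = a * b / C" unfolding a_def b_def fl by (simp add: field_simps)
  finally have q: "real (card (Mw (Times r s))) / fact l \<le> a * b / C" .
  have "real (card (Mw (Times r s))) / fact l * g l \<le> a * b / C * g l"
    using q g0 by (intro mult_right_mono) auto
  also have "\<dots> \<le> a * b / C * (C * (g k + g (l-k) + 1))"
    using grec[OF kl] a01 b01 Cpos unfolding C_def by (intro mult_left_mono) auto
  also have "\<dots> = a * b * (g k + g (l-k) + 1)" using Cpos by (simp add: field_simps)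
  also have "\<dots> \<le> a * g k + b * g (l-k) + 1"
  proof -
    have "a * b * g k \<le> a * 1 * g k" using a01 b01 g0[of k]
      by (intro mult_right_mono mult_left_mono) auto
    moreover have "a * b * g (l-k) \<le> 1 * b * g (l-k)"
      using a01 b01 g0[of "l-k"] by (intro mult_right_mono) auto
    moreover have "a * b \<le> 1" using a01 b01 by (simp add: mult_le_one)
    ultimately show ?thesis by (simp add: distrib_left)
  qed
  also have "\<dots> \<le> real (rsize r) + real (rsize s) + 1"
    using IHr IHs unfolding a_def b_def by (simp add: mult.commute)
  finally show ?case unfolding l_def by simp
qed



definition SIG :: "'a list \<Rightarrow> 'a rexp" where "SIG sg = foldr (\<lambda>a r. Plus (Atom a) r) sg Eps"

lemma lang_SIG: "lang (SIG sg) = insert [] ((\<lambda>a. [a]) ` set sg)"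
  by (induction sg) (auto simp: SIG_def)

lemma atoms_SIG: "atoms (SIG sg) \<subseteq> set sg"
  by (induction sg) (auto simp: SIG_def)

lemma lang_star_SIG: "lang (Star (SIG sg)) = {w. set w \<subseteq> set sg}"
proof
  show "lang (Star (SIG sg)) \<subseteq> {w. set w \<subseteq> set sg}"
  proof
    fix w assume "w \<in> lang (Star (SIG sg))"
    then have "w \<in> star (lang (SIG sg))" by simp
    then show "w \<in> {w. set w \<subseteq> set sg}"
      by (induction rule: star.induct) (auto simp: lang_SIG)
  qed
next
  show "{w. set w \<subseteq> set sg} \<subseteq> lang (Star (SIG sg))"
  proof
    fix w assume "w \<in> {w. set w \<subseteq> set sg}"
    then have "set w \<subseteq> set sg" by simp
    then have "w \<in> star (lang (SIG sg))"
    proof (induction w)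
      case Nil show ?case by (rule star.star_Nil)
    next
      case (Cons a w)
      have "[a] \<in> lang (SIG sg)" using Cons.prems by (auto simp: lang_SIG)
      moreover have "w \<in> star (lang (SIG sg))" using Cons by simp
      ultimately have "[a] @ w \<in> star (lang (SIG sg))" by (rule star.star_app)
      then show ?case by simp
    qed
    then show "w \<in> lang (Star (SIG sg))" by simp
  qed
qed

lemma concE: "w \<in> conc A B \<Longrightarrow> (\<And>u v. w = u @ v \<Longrightarrow> u \<in> A \<Longrightarrow> v \<in> B \<Longrightarrow> P) \<Longrightarrow> P"
  unfolding conc_def by blast

fun plusl :: "'a rexp list \<Rightarrow> 'a rexp" where
  "plusl [] = Eps"
| "plusl [r] = r"
| "plusl (r # s # rs) = Plus r (plusl (s # rs))"

lemma lang_plusl: "rs \<noteq> [] \<Longrightarrow> lang (plusl rs) = (\<Union>r\<in>set rs. lang r)"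
  by (induction rs rule: plusl.induct) auto

lemma atoms_plusl: "atoms (plusl rs) \<subseteq> (\<Union>r\<in>set rs. atoms r)"
  by (induction rs rule: plusl.induct) auto

fun Qr :: "'a list \<Rightarrow> nat \<Rightarrow> 'a list \<Rightarrow> 'a rexp" where
  "Qr sg 0 xs = Star (SIG sg)"
| "Qr sg (Suc k) xs = (if xs = [] then Star (SIG sg) else
     plusl (map (\<lambda>a. Times (Star (SIG sg)) (Times (Atom a) (Qr sg k (remove1 a xs)))) xs))"

lemma atoms_Qr: "atoms (Qr sg k xs) \<subseteq> set sg \<union> set xs"
proof (induction k arbitrary: xs)
  case 0 then show ?case using atoms_SIG[of sg] by auto
next
  case (Suc k)
  show ?case
  proof (cases "xs = []")
    case True then show ?thesis using atoms_SIG[of sg] by auto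
  next
    case False
    have "atoms (Qr sg (Suc k) xs) \<subseteq> (\<Union>a\<in>set xs. atoms (Times (Star (SIG sg)) (Times (Atom a) (Qr sg k (remove1 a xs)))))"
      using False atoms_plusl by fastforce
    also have "\<dots> \<subseteq> set sg \<union> set xs"
    proof (rule UN_least)
      fix a assume a: "a \<in> set xs"
      have "atoms (Qr sg k (remove1 a xs)) \<subseteq> set sg \<union> set xs"
        using Suc.IH[of "remove1 a xs"] set_remove1_subset[of a xs] by blast
      then show "atoms (Times (Star (SIG sg)) (Times (Atom a) (Qr sg k (remove1 a xs)))) \<subseteq> set sg \<union> set xs"
        using a atoms_SIG[of sg] by auto
    qed
    finally show ?thesis .
  qed
qed

lemma decomp: "X \<noteq> {} \<Longrightarrow> X \<subseteq> set w \<Longrightarrow> \<exists>u a v. w = u @ a # v \<and> a \<in> X \<and> X - {a} \<subseteq> set v"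
proof (induction w)
  case Nil then show ?case by auto
next
  case (Cons b w)
  show ?case
  proof (cases "b \<in> X")
    case True
    then show ?thesis using Cons.prems by (intro exI[of _ "[]"] exI[of _ b] exI[of _ w]) auto
  next
    case False
    then have "X \<subseteq> set w" using Cons.prems by auto
    then obtain u a v where "w = u @ a # v" "a \<in> X" "X - {a} \<subseteq> set v" using Cons by blast
    then show ?thesis by (intro exI[of _ "b # u"] exI[of _ a] exI[of _ v]) auto
  qed
qed

lemma lang_Qr: "distinct xs \<Longrightarrow> set xs \<subseteq> set sg \<Longrightarrow> length xs \<le> k \<Longrightarrow>
   lang (Qr sg k xs) = {w. set w \<subseteq> set sg \<and> set xs \<subseteq> set w}"
proof (induction k arbitrary: xs)
  case 0 then show ?case using lang_star_SIG[of sg] by simp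
next
  case (Suc k)
  show ?case
  proof (cases "xs = []")
    case True then show ?thesis using lang_star_SIG[of sg] by simp
  next
    case False
    have IH: "lang (Qr sg k (remove1 a xs)) = {w. set w \<subseteq> set sg \<and> set xs - {a} \<subseteq> set w}" if "a \<in> set xs" for a
    proof -
      have "length (remove1 a xs) \<le> k" using Suc.prems(3) that by (simp add: length_remove1)
      then show ?thesis using Suc.IH[of "remove1 a xs"] Suc.prems by auto
    qed
    have L: "lang (Qr sg (Suc k) xs) = (\<Union>a\<in>set xs. conc {w. set w \<subseteq> set sg} (conc {[a]} (lang (Qr sg k (remove1 a xs)))))"
      using False lang_star_SIG[of sg] by (simp add: lang_plusl)
    show ?thesis
    proof
      show "lang (Qr sg (Suc k) xs) \<subseteq> {w. set w \<subseteq> set sg \<and> set xs \<subseteq> set w}"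
      proof
        fix w assume "w \<in> lang (Qr sg (Suc k) xs)"
        then obtain a where a: "a \<in> set xs" and wc:
          "w \<in> conc {w. set w \<subseteq> set sg} (conc {[a]} (lang (Qr sg k (remove1 a xs))))"
          unfolding L by blast
        from wc obtain u w' where "w = u @ w'" and u: "set u \<subseteq> set sg" and
          "w' \<in> conc {[a]} (lang (Qr sg k (remove1 a xs)))" by (rule concE) auto
        then obtain v where w: "w = u @ [a] @ v" and v: "v \<in> lang (Qr sg k (remove1 a xs))"
          by (auto elim!: concE)
        have "set v \<subseteq> set sg" "set xs - {a} \<subseteq> set v" using v IH[OF a] by auto
        then show "w \<in> {w. set w \<subseteq> set sg \<and> set xs \<subseteq> set w}" using w u a Suc.prems(2) by auto
      qed
    next
      show "{w. set w \<subseteq> set sg \<and> set xs \<subseteq> set w} \<subseteq> lang (Qr sg (Suc k) xs)"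
      proof
        fix w assume "w \<in> {w. set w \<subseteq> set sg \<and> set xs \<subseteq> set w}"
        then have w1: "set w \<subseteq> set sg" and w2: "set xs \<subseteq> set w" by auto
        obtain u a v where d: "w = u @ a # v" "a \<in> set xs" "set xs - {a} \<subseteq> set v"
          using decomp[of "set xs" w] False w2 by auto
        have "v \<in> lang (Qr sg k (remove1 a xs))" using IH[OF d(2)] d w1 by auto
        then have m1: "[a] @ v \<in> conc {[a]} (lang (Qr sg k (remove1 a xs)))" by (intro concI) auto
        have uX: "u \<in> {w. set w \<subseteq> set sg}" using d w1 by auto
        have "u @ ([a] @ v) \<in> conc {w. set w \<subseteq> set sg} (conc {[a]} (lang (Qr sg k (remove1 a xs))))"
          by (rule concI[OF uX m1])
        then show "w \<in> lang (Qr sg (Suc k) xs)" unfolding L using d by auto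
      qed
    qed
  qed
qed

lemma occ_ge1: "1 \<le> occ w a \<longleftrightarrow> a \<in> set w"
  by (induction w) (auto simp: occ_def)

lemma occ_ge1': "Suc 0 \<le> occ w a \<longleftrightarrow> a \<in> set w"
  using occ_ge1 by simp

lemma Pn_alt: "Pn n = {w. set w \<subseteq> {1..n} \<and> {1..n} \<subseteq> set w}"
  by (auto simp: Pn_def occ_ge1')

lemma Pn_regex: "\<exists>r. atoms r \<subseteq> {1..n} \<and> lang r = Pn n"
proof -
  let ?sg = "[1..<n+1]"
  have s: "set ?sg = {1..n}" by auto
  have l: "lang (Qr ?sg n ?sg) = {w. set w \<subseteq> set ?sg \<and> set ?sg \<subseteq> set w}"
    by (rule lang_Qr) auto
  have a: "atoms (Qr ?sg n ?sg) \<subseteq> set ?sg \<union> set ?sg" by (rule atoms_Qr)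
  show ?thesis
    using l a unfolding s Pn_alt by (intro exI[of _ "Qr ?sg n ?sg"]) simp
qed

lemma Mw_Pn: assumes "lang r = Pn n" shows "Mw r = permutations_of_set {1..n}"
proof -
  have lw: "n \<le> length w" if "w \<in> Pn n" for w
  proof -
    have "{1..n} \<subseteq> set w" using that unfolding Pn_alt by auto
    then have "card {1..n} \<le> card (set w)" by (intro card_mono) auto
    then show ?thesis using card_length[of w] by simp
  qed
  have p0: "[1..<n+1] \<in> Pn n" unfolding Pn_alt by auto
  have m: "mlen r = n"
  proof -
    obtain w where w: "w \<in> lang r" "length w = mlen r" using mlen_props[of r] by blast
    then have "w \<in> Pn n" using assms by simp
    then have "n \<le> length w" by (rule lw)
    then have "n \<le> mlen r" using w(2) by simp
    moreover have "mlen r \<le> length [1..<n+1]" using mlen_props[of r] p0 assms by blast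
    moreover have "length [1..<n+1] = n" by simp
    ultimately show ?thesis by linarith
  qed
  show ?thesis
  proof
    show "Mw r \<subseteq> permutations_of_set {1..n}"
    proof
      fix w assume "w \<in> Mw r"
      then have w: "w \<in> Pn n" "length w = n" using assms m unfolding Mw_def by auto
      then have sw: "set w = {1..n}" unfolding Pn_alt by auto
      then have "distinct w" using w(2) by (intro card_distinct) simp
      then show "w \<in> permutations_of_set {1..n}" using sw unfolding permutations_of_set_def by simp
    qed
  next
    show "permutations_of_set {1..n} \<subseteq> Mw r"
    proof
      fix w assume "w \<in> permutations_of_set {1..n}"
      then have "set w = {1..n}" "distinct w" unfolding permutations_of_set_def by auto
      then have "length w = n" "w \<in> Pn n" using distinct_card[of w] unfolding Pn_alt by auto
      then show "w \<in> Mw r" using assms m unfolding Mw_def by auto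
    qed
  qed
qed

lemma rpn_lower:
  fixes g :: "nat \<Rightarrow> real"
  assumes g0: "\<And>l. 0 \<le> g l" and g00: "g 0 \<le> 1" and g1: "g 1 \<le> 1"
    and grec: "\<And>l k. k \<le> l \<Longrightarrow> g l \<le> real (l choose k) * (g k + g (l-k) + 1)"
  shows "g n \<le> real (rpn {1..n} (Pn n))"
proof -
  have ex: "\<exists>k r. atoms r \<subseteq> {1..n} \<and> lang r = Pn n \<and> rsize r = k" using Pn_regex by blast
  obtain r where r: "atoms r \<subseteq> {1..n}" "lang r = Pn n" "rsize r = rpn {1..n} (Pn n)"
    using LeastI_ex[OF ex] unfolding rpn_def by blast
  have M: "Mw r = permutations_of_set {1..n}" using Mw_Pn[OF r(2)] .
  have "real (card (Mw r)) / fact (card {1..n}) * g (card {1..n}) \<le> real (rsize r)"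
    using main_claim[OF g0 g00 g1 grec, of "{1..n}" r] M by auto
  then show ?thesis using M r(3) by simp
qed


lemma div_le_div_help: "(0::real) < b \<Longrightarrow> 0 < e \<Longrightarrow> a*e \<le> d*b \<Longrightarrow> a/b \<le> d/e"
  by (simp add: field_simps)

theorem corollary8p6:
  shows "\<exists>c > 0. \<exists>N. \<forall>n \<ge> N.
     real (rpn {1..n} (Pn n)) \<ge> c * 4 ^ n * real n powr (- (3 + log 2 (real n)) / 4)"
proof -
  obtain N0 where N0: "N0 \<ge> 2" and key: "\<And>n k. n \<ge> N0 \<Longrightarrow> 1 \<le> k \<Longrightarrow> k \<le> n div 2 \<Longrightarrow>
     (4::real)^k * Fr (real (n-k)) \<le> real (n choose k) * Fr (real n)"
    using key_binom by blast
  define c :: real where "c = 1 / 4^N0"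
  define g :: "nat \<Rightarrow> real" where "g l = c * 4^l / Fr (real l)" for l
  have cpos: "c > 0" unfolding c_def by simp
  have g0: "0 \<le> g l" for l unfolding g_def Fr_def using cpos by simp
  have g00: "g 0 \<le> 1" unfolding g_def Fr_def by simp
  have p16: "(4::real)^2 \<le> 4^N0" using N0 by (intro power_increasing) auto
  have g1: "g 1 \<le> 1" unfolding g_def Fr_def c_def using p16 by simp
  have gle1: "g l \<le> 1" if l: "1 \<le> l" "l < N0" for l
  proof -
    have F1: "1 \<le> Fr (real l)" using l Fr_ge1 by simp
    have "g l \<le> c * 4^l / 1" unfolding g_def using F1 cpos
      by (intro divide_left_mono) auto
    also have "\<dots> = 4^l / 4^N0" unfolding c_def by simp
    also have "\<dots> \<le> 1" using l by (simp add: power_increasing)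
    finally show ?thesis .
  qed
  have grec: "g l \<le> real (l choose k) * (g k + g (l-k) + 1)" if kl: "k \<le> l" for l k
  proof -
    consider "k = 0" | "k = l" | "1 \<le> k" "k < l" using kl by linarith
    then show ?thesis
    proof cases
      case 1 then show ?thesis using g0[of 0] by simp
    next
      case 2 then show ?thesis using g0[of 0] by simp
    next
      case 3
      have C1: "1 \<le> real (l choose k)" using zero_less_binomial[OF kl] by linarith
      have X: "1 \<le> g k + g (l-k) + 1" using g0[of k] g0[of "l-k"] by simp
      show ?thesis
      proof (cases "l < N0")
        case True
        have "g l \<le> 1 * 1" using gle1[of l] 3 True by simp
        also have "\<dots> \<le> real (l choose k) * (g k + g (l-k) + 1)"
          using C1 X by (intro mult_mono) auto
        finally show ?thesis .
      next
        case False
        define k' where "k' = min k (l-k)"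
        have k'1: "1 \<le> k'" "k' \<le> l div 2" using 3 unfolding k'_def by auto
        have kb: "(4::real)^k' * Fr (real (l-k')) \<le> real (l choose k') * Fr (real l)"
          using key[of l k'] False k'1 by simp
        have Ceq: "(l choose k') = (l choose k)"
        proof (cases "k \<le> l - k")
          case True then show ?thesis unfolding k'_def by simp
        next
          case False
          then have "k' = l - k" unfolding k'_def by simp
          then show ?thesis using binomial_symmetric[OF kl] by simp
        qed
        have gk': "g (l-k') \<le> g k + g (l-k) + 1"
        proof (cases "k \<le> l - k")
          case True then show ?thesis unfolding k'_def using g0[of k] by simp
        next
          case False
          then have "l - k' = k" unfolding k'_def using kl by simp
          then show ?thesis using g0[of "l-k"] by simp
        qed
        have Fl: "0 < Fr (real l)" using 3 Fr_pos by simp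
        have Flk: "0 < Fr (real (l-k'))" using k'1 3 Fr_pos[of "real (l-k')"] by simp
        have pw: "(4::real)^l = 4^(l-k') * 4^k'"
          using k'1 3 by (simp add: power_add[symmetric])
        have "c * 4^l * Fr (real (l-k')) = (c * 4^(l-k')) * (4^k' * Fr (real (l-k')))"
          unfolding pw by (simp add: mult_ac)
        also have "\<dots> \<le> (c * 4^(l-k')) * (real (l choose k') * Fr (real l))"
          using kb cpos by (intro mult_left_mono) auto
        also have "\<dots> = (real (l choose k') * (c * 4^(l-k'))) * Fr (real l)" by (simp add: mult_ac)
        finally have "c * 4^l / Fr (real l) \<le> (real (l choose k') * (c * 4^(l-k'))) / Fr (real (l-k'))"
          by (rule div_le_div_help[OF Fl Flk])
        then have "g l \<le> real (l choose k') * g (l-k')" unfolding g_def by (simp add: mult.assoc)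
        also have "\<dots> \<le> real (l choose k) * (g k + g (l-k) + 1)"
          unfolding Ceq using gk' by (intro mult_left_mono) auto
        finally show ?thesis .
      qed
    qed
  qed
  show ?thesis
  proof (intro exI[of _ c] conjI exI[of _ 1] allI impI)
    show "0 < c" by (rule cpos)
    fix n :: nat assume "1 \<le> n"
    have "g n \<le> real (rpn {1..n} (Pn n))"
      by (rule rpn_lower[OF g0 g00 g1 grec])
    moreover have "g n = c * 4 ^ n * real n powr (- (3 + log 2 (real n)) / 4)"
    proof -
      have e: "- (3 + log 2 (real n)) / 4 = - ((3 + log 2 (real n)) / 4)" by (rule minus_divide_left[symmetric])
      have "real n powr (- (3 + log 2 (real n)) / 4) = real n powr (- ((3 + log 2 (real n)) / 4))"
        by (simp only: e)
      also have "\<dots> = 1 / real n powr ((3 + log 2 (real n)) / 4)" by (rule powr_minus_divide)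
      finally have "real n powr (- (3 + log 2 (real n)) / 4) = 1 / Fr (real n)" unfolding Fr_def .
      then show ?thesis unfolding g_def by simp
    qed
    ultimately show "c * 4 ^ n * real n powr (- (3 + log 2 (real n)) / 4) \<le> real (rpn {1..n} (Pn n))"
      by simp
  qed
qed

end
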